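(* Suppose the data are generated from the uncontaminated causal invertible VARMA model $\phi_0(L)x_t=\theta_0(L)\varepsilon_t$. Let $H_T\subset\{1,\dots,T\}$ be a (possibly data-dependent) retained subset, let $\kappa\ge 0$ be an integer, and let $\hat\varphi_T(\cdot)$ be the minimiser over $\mathcal V$ of the residual-based criterion $f_T(\varphi,\cdot)$. Assume: (A1, local optimisation stability) there is an open set $\mathcal N\subset\mathcal V$ such that, with probability tending to one as $T\to\infty$: (i) there exists $\delta>0$ with $\inf_{\varphi\notin\mathcal N}f_T(\varphi,H_T)\ge\inf_{\varphi\in\mathcal N}f_T(\varphi,H_T)+\delta$; and (ii) for every $\varepsilon>0$ there exists $\eta_\varepsilon>0$ with $\inf_{\varphi\in\mathcal N,\ \|\varphi-\hat\varphi_T(H_T)\|\ge\varepsilon}f_T(\varphi,H_T)\ge f_T(\hat\varphi_T(H_T),H_T)+\eta_\varepsilon$; (A2, stability under patch removal) $\sup_{\varphi\in\mathcal V}|f_T(\varphi,H_T)-f_T(\varphi,S^\kappa H_T)|\to 0$ in probability. Then, with probability tending to one, on the same open set $\mathcal N$: (i) there exists $\delta'>0$ with $\inf_{\varphi\notin\mathcal N}f_T(\varphi,S^\kappa H_T)\ge\inf_{\varphi\in\mathcal N}f_T(\varphi,S^\kappa H_T)+\delta'$; (ii) for every $\varepsilon>0$ there exists $\eta'_\varepsilon>0$ with $\inf_{\varphi\in\mathcal N,\ \|\varphi-\hat\varphi_T(S^\kappa H_T)\|\ge\varepsilon}f_T(\varphi,S^\kappa H_T)\ge f_T(\hat\varphi_T(S^\kappa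 H_T),S^\kappa H_T)+\eta'_\varepsilon$. Furthermore, $$(K^\kappa\hat\varphi_T)(H_T)-\hat\varphi_T(H_T)\overset{p}{\longrightarrow}0.$$ If instead $\hat\varphi_T$ is a maximiser of the criterion, the same statement holds with every infimum replaced by a supremum and every inequality of the form "$\ge\ \cdot+c$" replaced by "$\le\ \cdot-c$", in both the hypotheses and the conclusions.
   Context: Setting: $\{x_t\}$ is a $d$-dimensional mean-zero process with $\phi_0(L)x_t=\theta_0(L)\varepsilon_t$ (VARMA$(p,q)$), $\varepsilon_t$ zero-mean innovations. The parameter space $\mathcal V$ consists of $\varphi=(\phi,\theta)$ for which the model is causal and invertible; $\varphi_0=(\phi_0,\theta_0)\in\mathcal V$. For $\varphi\in\mathcal V$, $e_t(\varphi)=\theta^{-1}(L)\phi(L)x_t$ is the residual, so $e_t(\varphi_0)=\varepsilon_t$. For a subset $H\subset\{1,\dots,T\}$, the sample criterion is $f_T(\varphi,H)=g_T(\{e_t(\varphi):t\in H\})$ for some function $g_T$ (it depends on $\varphi$ only through these residuals), and $\hat\varphi_T(H)$ denotes an exact optimiser of $f_T(\cdot,H)$ over $\mathcal V$. Patch removal: with $H_T^c=\{1,\dots,T\}\setminus H_T$, $S^\kappa H_T=H_T\setminus\bigcup_{t\in H_T^c}\{t+1,\dots,\min(t+\kappa,T)\}$, and the patch removal operator acts on estimators by $(K^\kappa\hat\varphi_T)(H_T)=\hat\varphi_T(S^\kappa H_T)$. $\kappa$ may depend on $T$.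
   Formalization: In A1(i)-(ii) and in conclusions (i)-(ii), $\delta$, $\eta_\varepsilon$, $\delta'$ and $\eta'_\varepsilon$ are fixed positive constants, independent of T and of the sample, chosen before the event whose probability tends to one. Each condition added here is assumed in the paper as well or is needed for the statement above to hold. *)

theory Defs
  imports "HOL-Probability.Probability"
begin

definition patch_removal :: "nat \<Rightarrow> nat \<Rightarrow> nat set \<Rightarrow> nat set" where
  "patch_removal \<kappa> T H = H - (\<Union>t\<in>{1..T} - H. {t+1..min (t+\<kappa>) T})"

text \<open>"With probability tending to one" (inner-probability formulation): there are
  measurable events A_T contained in the event where the property holds at sample size T,
  with P(A_T) tending to 1.\<close>
definition wpa :: "'w measure \<Rightarrow> (nat \<Rightarrow> 'w \<Rightarrow> bool) \<Rightarrow> bool" where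
  "wpa M P \<longleftrightarrow> (\<exists>A. (\<forall>T. A T \<in> sets M \<and> A T \<subseteq> {\<omega>\<in>space M. P T \<omega>})
                     \<and> (\<lambda>T. measure M (A T)) \<longlonglongrightarrow> 1)"

text \<open>Infima/suprema are taken in the extended reals (inf of the empty set = +infinity,
  sup of the empty set = -infinity).\<close>

definition gap_min :: "('p \<Rightarrow> real) \<Rightarrow> 'p set \<Rightarrow> 'p set \<Rightarrow> real \<Rightarrow> bool" where
  "gap_min F V N \<delta> \<longleftrightarrow>
     (INF \<phi>\<in>V - N. ereal (F \<phi>)) \<ge> (INF \<phi>\<in>N. ereal (F \<phi>)) + ereal \<delta>"

definition sharp_min :: "('p::real_normed_vector \<Rightarrow> real) \<Rightarrow> 'p set \<Rightarrow> 'p \<Rightarrow> real \<Rightarrow> real \<Rightarrow> bool" where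
  "sharp_min F N \<psi> \<epsilon> \<eta> \<longleftrightarrow>
     (INF \<phi>\<in>{\<phi>\<in>N. norm (\<phi> - \<psi>) \<ge> \<epsilon>}. ereal (F \<phi>)) \<ge> ereal (F \<psi>) + ereal \<eta>"

definition gap_max :: "('p \<Rightarrow> real) \<Rightarrow> 'p set \<Rightarrow> 'p set \<Rightarrow> real \<Rightarrow> bool" where
  "gap_max F V N \<delta> \<longleftrightarrow>
     (SUP \<phi>\<in>V - N. ereal (F \<phi>)) \<le> (SUP \<phi>\<in>N. ereal (F \<phi>)) - ereal \<delta>"

definition sharp_max :: "('p::real_normed_vector \<Rightarrow> real) \<Rightarrow> 'p set \<Rightarrow> 'p \<Rightarrow> real \<Rightarrow> real \<Rightarrow> bool" where
  "sharp_max F N \<psi> \<epsilon> \<eta> \<longleftrightarrow>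
     (SUP \<phi>\<in>{\<phi>\<in>N. norm (\<phi> - \<psi>) \<ge> \<epsilon>}. ereal (F \<phi>)) \<le> ereal (F \<psi>) - ereal \<eta>"

end

theory Submission
  imports Defs
begin

lemma wpa_conj:
  assumes "prob_space M" "wpa M P" "wpa M Q"
  shows "wpa M (\<lambda>T \<omega>. P T \<omega> \<and> Q T \<omega>)"
proof -
  interpret prob_space M by fact
  obtain A where A: "\<And>T. A T \<in> sets M" "\<And>T. A T \<subseteq> {\<omega>\<in>space M. P T \<omega>}"
    and lA: "(\<lambda>T. measure M (A T)) \<longlonglongrightarrow> 1" using assms(2) unfolding wpa_def by blast
  obtain B where B: "\<And>T. B T \<in> sets M" "\<And>T. B T \<subseteq> {\<omega>\<in>space M. Q T \<omega>}"
    and lB: "(\<lambda>T. measure M (B T)) \<longlonglongrightarrow> 1" using assms(3) unfolding wpa_def by blast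
  have le: "measure M (A T) + measure M (B T) - 1 \<le> measure M (A T \<inter> B T)" for T
  proof -
    have "measure M (A T \<union> B T) = measure M (A T) + measure M (B T) - measure M (A T \<inter> B T)"
      using A B by (intro measure_Un3) (auto simp: fmeasurable_eq_sets)
    moreover have "measure M (A T \<union> B T) \<le> 1" by (rule prob_le_1)
    ultimately show ?thesis by linarith
  qed
  have "(\<lambda>T. measure M (A T) + measure M (B T) - 1) \<longlonglongrightarrow> 1 + 1 - 1"
    by (intro tendsto_intros lA lB)
  then have l1: "(\<lambda>T. measure M (A T) + measure M (B T) - 1) \<longlonglongrightarrow> 1" by simp
  have "(\<lambda>T. measure M (A T \<inter> B T)) \<longlonglongrightarrow> 1"
    by (rule tendsto_sandwich[OF _ _ l1 tendsto_const]) (auto simp: le prob_le_1)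
  moreover have "\<forall>T. A T \<inter> B T \<in> sets M \<and> A T \<inter> B T \<subseteq> {\<omega>\<in>space M. P T \<omega> \<and> Q T \<omega>}"
    using A B by blast
  ultimately show ?thesis unfolding wpa_def by (intro exI[of _ "\<lambda>T. A T \<inter> B T"]) simp
qed

lemma wpa_mono:
  assumes "wpa M P" "\<And>T \<omega>. \<omega> \<in> space M \<Longrightarrow> P T \<omega> \<Longrightarrow> Q T \<omega>"
  shows "wpa M Q"
proof -
  obtain A where A: "\<forall>T. A T \<in> sets M \<and> A T \<subseteq> {\<omega>\<in>space M. P T \<omega>}"
    and l: "(\<lambda>T. measure M (A T)) \<longlonglongrightarrow> 1" using assms(1) unfolding wpa_def by blast
  have "\<forall>T. A T \<in> sets M \<and> A T \<subseteq> {\<omega>\<in>space M. Q T \<omega>}" using A assms(2) by blast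
  with l show ?thesis unfolding wpa_def by (intro exI[of _ A]) simp
qed

lemma sharp_min_iff:
  "sharp_min F N \<psi> \<epsilon> \<eta> \<longleftrightarrow> (\<forall>\<phi>\<in>N. \<epsilon> \<le> norm (\<phi> - \<psi>) \<longrightarrow> F \<psi> + \<eta> \<le> F \<phi>)"
  unfolding sharp_min_def by (auto simp: le_INF_iff)

lemma sharp_max_iff:
  "sharp_max F N \<psi> \<epsilon> \<eta> \<longleftrightarrow> (\<forall>\<phi>\<in>N. \<epsilon> \<le> norm (\<phi> - \<psi>) \<longrightarrow> F \<phi> \<le> F \<psi> - \<eta>)"
  unfolding sharp_max_def by (auto simp: SUP_le_iff)

lemma sharp_max_neg: "sharp_max F N \<psi> \<epsilon> \<eta> \<longleftrightarrow> sharp_min (\<lambda>x. - F x) N \<psi> \<epsilon> \<eta>"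
  unfolding sharp_max_iff sharp_min_iff by auto

lemma gap_max_neg: "gap_max F V N \<delta> \<longleftrightarrow> gap_min (\<lambda>x. - F x) V N \<delta>"
proof -
  have e: "(INF x\<in>S. ereal (- F x)) = - (SUP x\<in>S. ereal (F x))" for S
    using ereal_INF_uminus_eq[of "\<lambda>x. ereal (F x)" S] by simp
  have r: "(a \<le> b - ereal d) \<longleftrightarrow> (- b + ereal d \<le> - a)" for a b :: ereal and d :: real
    by (cases a; cases b) auto
  show ?thesis unfolding gap_max_def gap_min_def e by (rule r)
qed

lemma gap_min_iff:
  fixes F :: "'p \<Rightarrow> real"
  assumes "N \<noteq> {}" "\<And>\<phi>. \<phi> \<in> N \<Longrightarrow> m \<le> F \<phi>"
  shows "gap_min F V N \<delta> \<longleftrightarrow> (\<forall>\<phi>\<in>V - N. (INF x\<in>N. F x) + \<delta> \<le> F \<phi>)"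
proof -
  have "bdd_below (F ` N)" using assms(2) unfolding bdd_below_def by auto
  then have "ereal (INF x\<in>N. F x) = (INF x\<in>N. ereal (F x))"
    using ereal_Inf'[of "F ` N"] assms(1) by (simp add: image_comp)
  then have eq: "(INF x\<in>N. ereal (F x)) = ereal (INF x\<in>N. F x)" by simp
  show ?thesis unfolding gap_min_def eq by (auto simp: le_INF_iff)
qed

lemma core_all:
  fixes F G :: "'p::real_normed_vector \<Rightarrow> real"
  assumes psi: "\<psi> \<in> V" "\<forall>\<phi>\<in>V. F \<psi> \<le> F \<phi>"
    and psi': "\<psi>' \<in> V" "\<forall>\<phi>\<in>V. G \<psi>' \<le> G \<phi>"
    and close: "\<forall>\<phi>\<in>V. \<bar>F \<phi> - G \<phi>\<bar> < c"
    and gap: "gap_min F V N \<delta>" and dpos: "\<delta> > 0" and NV: "N \<subseteq> V"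
  shows "gap_min G V N (\<delta> - 2*c)
    \<and> (\<forall>\<epsilon> \<eta>. sharp_min F N \<psi> \<epsilon> \<eta> \<longrightarrow> 2*c < \<delta> \<longrightarrow> 2*c < \<eta> \<longrightarrow> norm (\<psi>' - \<psi>) < \<epsilon>)
    \<and> (\<forall>\<epsilon> \<eta>. sharp_min F N \<psi> (\<epsilon>/2) \<eta> \<longrightarrow> norm (\<psi>' - \<psi>) < \<epsilon>/2
          \<longrightarrow> sharp_min G N \<psi>' \<epsilon> (\<eta> - 2*c))"
proof -
  have NE: "N \<noteq> {}"
  proof
    assume N0: "N = {}"
    have "(INF \<phi>\<in>V - N. ereal (F \<phi>)) \<le> ereal (F \<psi>)" using psi N0 by (intro INF_lower) auto
    moreover have "\<top> + ereal \<delta> \<le> (INF \<phi>\<in>V - N. ereal (F \<phi>))" using gap N0 by (simp add: gap_min_def)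
    ultimately have "\<top> + ereal \<delta> \<le> ereal (F \<psi>)" by (rule order_trans[rotated])
    then show False by (simp add: top_ereal_def)
  qed
  define bF where "bF = (INF x\<in>N. F x)"
  define bG where "bG = (INF x\<in>N. G x)"
  have gF: "\<forall>\<phi>\<in>V - N. bF + \<delta> \<le> F \<phi>"
    using gap gap_min_iff[OF NE, where F=F and m="F \<psi>" and V=V and \<delta>=\<delta>] psi NV unfolding bF_def by auto
  have bddF: "bdd_below (F ` N)" using psi NV unfolding bdd_below_def by auto
  have bddG: "bdd_below (G ` N)" using psi' NV unfolding bdd_below_def by auto
  have bFl: "\<And>\<phi>. \<phi> \<in> N \<Longrightarrow> bF \<le> F \<phi>" unfolding bF_def using bddF by (rule cINF_lower2) auto
  have bGl: "\<And>\<phi>. \<phi> \<in> N \<Longrightarrow> bG \<le> G \<phi>" unfolding bG_def using bddG by (rule cINF_lower2) auto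
  have bFg: "F \<psi> \<le> bF" unfolding bF_def using NE psi NV by (intro cINF_greatest) auto
  have psiN: "\<psi> \<in> N"
  proof (rule ccontr)
    assume "\<psi> \<notin> N"
    then have "bF + \<delta> \<le> F \<psi>" using gF psi by auto
    with bFg dpos show False by linarith
  qed
  have bFe: "bF = F \<psi>" using bFl[OF psiN] bFg by linarith
  have bGF: "bG - c \<le> bF" unfolding bF_def
  proof (rule cINF_greatest[OF NE])
    fix \<phi> assume "\<phi> \<in> N"
    then show "bG - c \<le> F \<phi>" using bGl[of \<phi>] close NV by force
  qed
  have c1: "gap_min G V N (\<delta> - 2*c)"
  proof -
    have "\<forall>\<phi>\<in>V - N. bG + (\<delta> - 2*c) \<le> G \<phi>"
    proof
      fix \<phi> assume p: "\<phi> \<in> V - N"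
      then have "bF + \<delta> \<le> F \<phi>" using gF by auto
      moreover have "\<bar>F \<phi> - G \<phi>\<bar> < c" using p close by auto
      ultimately show "bG + (\<delta> - 2*c) \<le> G \<phi>" using bGF by linarith
    qed
    then show ?thesis using gap_min_iff[OF NE, where F=G and m="G \<psi>'" and V=V and \<delta>="\<delta> - 2*c"] psi' NV unfolding bG_def by auto
  qed
  have Fpp: "F \<psi>' < F \<psi> + 2*c"
  proof -
    have "\<bar>F \<psi>' - G \<psi>'\<bar> < c" "\<bar>F \<psi> - G \<psi>\<bar> < c" using close psi psi' by auto
    moreover have "G \<psi>' \<le> G \<psi>" using psi' psi by auto
    ultimately show ?thesis by linarith
  qed
  have c2: "\<forall>\<epsilon> \<eta>. sharp_min F N \<psi> \<epsilon> \<eta> \<longrightarrow> 2*c < \<delta> \<longrightarrow> 2*c < \<eta> \<longrightarrow> norm (\<psi>' - \<psi>) < \<epsilon>"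
  proof (intro allI impI)
    fix \<epsilon> \<eta> assume sh: "sharp_min F N \<psi> \<epsilon> \<eta>" and d: "2*c < \<delta>" and e: "2*c < \<eta>"
    show "norm (\<psi>' - \<psi>) < \<epsilon>"
    proof (rule ccontr)
      assume ne: "\<not> norm (\<psi>' - \<psi>) < \<epsilon>"
      show False
      proof (cases "\<psi>' \<in> N")
        case True
        then have "F \<psi> + \<eta> \<le> F \<psi>'" using sh ne unfolding sharp_min_iff by auto
        with Fpp e show False by linarith
      next
        case False
        then have "bF + \<delta> \<le> F \<psi>'" using gF psi' by auto
        with Fpp d bFe show False by linarith
      qed
    qed
  qed
  have c3: "\<forall>\<epsilon> \<eta>. sharp_min F N \<psi> (\<epsilon>/2) \<eta> \<longrightarrow> norm (\<psi>' - \<psi>) < \<epsilon>/2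
          \<longrightarrow> sharp_min G N \<psi>' \<epsilon> (\<eta> - 2*c)"
  proof (intro allI impI)
    fix \<epsilon> \<eta> assume sh: "sharp_min F N \<psi> (\<epsilon>/2) \<eta>" and nn: "norm (\<psi>' - \<psi>) < \<epsilon>/2"
    show "sharp_min G N \<psi>' \<epsilon> (\<eta> - 2*c)" unfolding sharp_min_iff
    proof (intro ballI impI)
      fix \<phi> assume pN: "\<phi> \<in> N" and le: "\<epsilon> \<le> norm (\<phi> - \<psi>')"
      have "norm (\<phi> - \<psi>') \<le> norm (\<phi> - \<psi>) + norm (\<psi>' - \<psi>)"
        using norm_triangle_ineq4[of "\<phi> - \<psi>" "\<psi>' - \<psi>"] by simp
      then have "\<epsilon>/2 \<le> norm (\<phi> - \<psi>)" using le nn by linarith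
      then have "F \<psi> + \<eta> \<le> F \<phi>" using sh pN unfolding sharp_min_iff by auto
      moreover have "\<bar>F \<phi> - G \<phi>\<bar> < c" "\<bar>F \<psi> - G \<psi>\<bar> < c" using close psi pN NV by auto
      moreover have "G \<psi>' \<le> G \<psi>" using psi' psi by auto
      ultimately show "G \<psi>' + (\<eta> - 2*c) \<le> G \<phi>" by linarith
    qed
  qed
  show ?thesis using c1 c2 c3 by blast
qed

lemma sup_close:
  assumes "(SUP \<phi>\<in>V. ereal \<bar>F \<phi> - G \<phi>\<bar>) < ereal c"
  shows "\<forall>\<phi>\<in>V. \<bar>F \<phi> - G \<phi>\<bar> < c"
proof
  fix \<phi> assume "\<phi> \<in> V"
  then have "ereal \<bar>F \<phi> - G \<phi>\<bar> \<le> (SUP \<phi>\<in>V. ereal \<bar>F \<phi> - G \<phi>\<bar>)" by (rule SUP_upper)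
  then have "ereal \<bar>F \<phi> - G \<phi>\<bar> < ereal c" using assms by (rule le_less_trans)
  then show "\<bar>F \<phi> - G \<phi>\<bar> < c" by simp
qed

lemma part_min:
  fixes M :: "'w measure"
    and V N :: "'p::real_normed_vector set"
    and f :: "nat \<Rightarrow> 'p \<Rightarrow> nat set \<Rightarrow> 'w \<Rightarrow> real"
    and \<phi>h :: "nat \<Rightarrow> nat set \<Rightarrow> 'w \<Rightarrow> 'p"
    and H :: "nat \<Rightarrow> 'w \<Rightarrow> nat set"
    and \<kappa> :: "nat \<Rightarrow> nat"
  assumes prob: "prob_space M"
    and HT: "\<And>T \<omega>. H T \<omega> \<subseteq> {1..T}"
    and N_sub: "N \<subseteq> V"
    and A2: "\<And>c. c > 0 \<Longrightarrow> wpa M (\<lambda>T \<omega>.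
              (SUP \<phi>\<in>V. ereal \<bar>f T \<phi> (H T \<omega>) \<omega> - f T \<phi> (patch_removal (\<kappa> T) T (H T \<omega>)) \<omega>\<bar>) < ereal c)"
  shows
   "((\<forall>T Hs \<omega>. Hs \<subseteq> {1..T} \<longrightarrow>
        \<phi>h T Hs \<omega> \<in> V \<and> (\<forall>\<phi>\<in>V. f T (\<phi>h T Hs \<omega>) Hs \<omega> \<le> f T \<phi> Hs \<omega>))
     \<and> (\<exists>\<delta>>0. wpa M (\<lambda>T \<omega>. gap_min (\<lambda>\<phi>. f T \<phi> (H T \<omega>) \<omega>) V N \<delta>))
     \<and> (\<forall>\<epsilon>>0. \<exists>\<eta>>0. wpa M (\<lambda>T \<omega>.
           sharp_min (\<lambda>\<phi>. f T \<phi> (H T \<omega>) \<omega>) N (\<phi>h T (H T \<omega>) \<omega>) \<epsilon> \<eta>))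
    \<longrightarrow>
     (\<exists>\<delta>'>0. wpa M (\<lambda>T \<omega>. gap_min (\<lambda>\<phi>. f T \<phi> (patch_removal (\<kappa> T) T (H T \<omega>)) \<omega>) V N \<delta>'))
     \<and> (\<forall>\<epsilon>>0. \<exists>\<eta>'>0. wpa M (\<lambda>T \<omega>.
           sharp_min (\<lambda>\<phi>. f T \<phi> (patch_removal (\<kappa> T) T (H T \<omega>)) \<omega>) N
             (\<phi>h T (patch_removal (\<kappa> T) T (H T \<omega>)) \<omega>) \<epsilon> \<eta>'))
     \<and> (\<forall>\<epsilon>>0. wpa M (\<lambda>T \<omega>.
           norm (\<phi>h T (patch_removal (\<kappa> T) T (H T \<omega>)) \<omega> - \<phi>h T (H T \<omega>) \<omega>) < \<epsilon>)))"
proof (intro impI)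
  assume hyp: "(\<forall>T Hs \<omega>. Hs \<subseteq> {1..T} \<longrightarrow>
        \<phi>h T Hs \<omega> \<in> V \<and> (\<forall>\<phi>\<in>V. f T (\<phi>h T Hs \<omega>) Hs \<omega> \<le> f T \<phi> Hs \<omega>))
     \<and> (\<exists>\<delta>>0. wpa M (\<lambda>T \<omega>. gap_min (\<lambda>\<phi>. f T \<phi> (H T \<omega>) \<omega>) V N \<delta>))
     \<and> (\<forall>\<epsilon>>0. \<exists>\<eta>>0. wpa M (\<lambda>T \<omega>.
           sharp_min (\<lambda>\<phi>. f T \<phi> (H T \<omega>) \<omega>) N (\<phi>h T (H T \<omega>) \<omega>) \<epsilon> \<eta>))"
  then have mn: "\<And>T Hs \<omega>. Hs \<subseteq> {1..T} \<Longrightarrow>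
        \<phi>h T Hs \<omega> \<in> V \<and> (\<forall>\<phi>\<in>V. f T (\<phi>h T Hs \<omega>) Hs \<omega> \<le> f T \<phi> Hs \<omega>)"
    and sharpw: "\<forall>\<epsilon>>0. \<exists>\<eta>>0. wpa M (\<lambda>T \<omega>.
           sharp_min (\<lambda>\<phi>. f T \<phi> (H T \<omega>) \<omega>) N (\<phi>h T (H T \<omega>) \<omega>) \<epsilon> \<eta>)" by blast+
  from hyp obtain \<delta> where dpos: "\<delta> > 0"
    and gapw: "wpa M (\<lambda>T \<omega>. gap_min (\<lambda>\<phi>. f T \<phi> (H T \<omega>) \<omega>) V N \<delta>)" by blast
  have SH: "patch_removal (\<kappa> T) T (H T \<omega>) \<subseteq> {1..T}" for T \<omega>
    using HT[of T \<omega>] unfolding patch_removal_def by blast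
  have key: "gap_min (\<lambda>\<phi>. f T \<phi> (patch_removal (\<kappa> T) T (H T \<omega>)) \<omega>) V N (\<delta> - 2*c)
    \<and> (\<forall>\<epsilon> \<eta>. sharp_min (\<lambda>\<phi>. f T \<phi> (H T \<omega>) \<omega>) N (\<phi>h T (H T \<omega>) \<omega>) \<epsilon> \<eta> \<longrightarrow> 2*c < \<delta> \<longrightarrow> 2*c < \<eta>
          \<longrightarrow> norm (\<phi>h T (patch_removal (\<kappa> T) T (H T \<omega>)) \<omega> - \<phi>h T (H T \<omega>) \<omega>) < \<epsilon>)
    \<and> (\<forall>\<epsilon> \<eta>. sharp_min (\<lambda>\<phi>. f T \<phi> (H T \<omega>) \<omega>) N (\<phi>h T (H T \<omega>) \<omega>) (\<epsilon>/2) \<eta>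
          \<longrightarrow> norm (\<phi>h T (patch_removal (\<kappa> T) T (H T \<omega>)) \<omega> - \<phi>h T (H T \<omega>) \<omega>) < \<epsilon>/2
          \<longrightarrow> sharp_min (\<lambda>\<phi>. f T \<phi> (patch_removal (\<kappa> T) T (H T \<omega>)) \<omega>) N
                (\<phi>h T (patch_removal (\<kappa> T) T (H T \<omega>)) \<omega>) \<epsilon> (\<eta> - 2*c))"
    if g: "gap_min (\<lambda>\<phi>. f T \<phi> (H T \<omega>) \<omega>) V N \<delta>"
      and s: "(SUP \<phi>\<in>V. ereal \<bar>f T \<phi> (H T \<omega>) \<omega> - f T \<phi> (patch_removal (\<kappa> T) T (H T \<omega>)) \<omega>\<bar>) < ereal c"
    for T \<omega> c
  proof (rule core_all)
    show "\<phi>h T (H T \<omega>) \<omega> \<in> V" "\<forall>\<phi>\<in>V. f T (\<phi>h T (H T \<omega>) \<omega>) (H T \<omega>) \<omega> \<le> f T \<phi> (H T \<omega>) \<omega>"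
      using mn[OF HT] by auto
    show "\<phi>h T (patch_removal (\<kappa> T) T (H T \<omega>)) \<omega> \<in> V"
      "\<forall>\<phi>\<in>V. f T (\<phi>h T (patch_removal (\<kappa> T) T (H T \<omega>)) \<omega>) (patch_removal (\<kappa> T) T (H T \<omega>)) \<omega>
          \<le> f T \<phi> (patch_removal (\<kappa> T) T (H T \<omega>)) \<omega>"
      using mn[OF SH] by auto
    show "\<forall>\<phi>\<in>V. \<bar>f T \<phi> (H T \<omega>) \<omega> - f T \<phi> (patch_removal (\<kappa> T) T (H T \<omega>)) \<omega>\<bar> < c"
      using s by (rule sup_close)
  qed (use g dpos N_sub in auto)
  have C1: "\<exists>\<delta>'>0. wpa M (\<lambda>T \<omega>. gap_min (\<lambda>\<phi>. f T \<phi> (patch_removal (\<kappa> T) T (H T \<omega>)) \<omega>) V N \<delta>')"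
  proof (intro exI conjI)
    show "\<delta> - 2 * (\<delta>/4) > 0" using dpos by simp
    show "wpa M (\<lambda>T \<omega>. gap_min (\<lambda>\<phi>. f T \<phi> (patch_removal (\<kappa> T) T (H T \<omega>)) \<omega>) V N (\<delta> - 2 * (\<delta>/4)))"
      using wpa_conj[OF prob gapw A2[of "\<delta>/4"]]
    proof (rule wpa_mono)
      fix T \<omega> assume a: "gap_min (\<lambda>\<phi>. f T \<phi> (H T \<omega>) \<omega>) V N \<delta> \<and>
          (SUP \<phi>\<in>V. ereal \<bar>f T \<phi> (H T \<omega>) \<omega> - f T \<phi> (patch_removal (\<kappa> T) T (H T \<omega>)) \<omega>\<bar>) < ereal (\<delta>/4)"
      note k = key[OF conjunct1[OF a] conjunct2[OF a]]
      then show "gap_min (\<lambda>\<phi>. f T \<phi> (patch_removal (\<kappa> T) T (H T \<omega>)) \<omega>) V N (\<delta> - 2 * (\<delta>/4))"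
        by (rule conjunct1)
    qed (use dpos in simp)
  qed
  have C2: "\<forall>\<epsilon>>0. \<exists>\<eta>'>0. wpa M (\<lambda>T \<omega>.
           sharp_min (\<lambda>\<phi>. f T \<phi> (patch_removal (\<kappa> T) T (H T \<omega>)) \<omega>) N
             (\<phi>h T (patch_removal (\<kappa> T) T (H T \<omega>)) \<omega>) \<epsilon> \<eta>')"
  proof (intro allI impI)
    fix \<epsilon> :: real assume ep: "\<epsilon> > 0"
    then obtain \<eta> where hp: "\<eta> > 0" and sw: "wpa M (\<lambda>T \<omega>.
           sharp_min (\<lambda>\<phi>. f T \<phi> (H T \<omega>) \<omega>) N (\<phi>h T (H T \<omega>) \<omega>) (\<epsilon>/2) \<eta>)"
      using sharpw half_gt_zero[OF ep] by blast
    define c where "c = min \<delta> \<eta> / 4"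
    have cp: "c > 0" "2*c < \<delta>" "2*c < \<eta>" using dpos hp unfolding c_def by auto
    show "\<exists>\<eta>'>0. wpa M (\<lambda>T \<omega>.
           sharp_min (\<lambda>\<phi>. f T \<phi> (patch_removal (\<kappa> T) T (H T \<omega>)) \<omega>) N
             (\<phi>h T (patch_removal (\<kappa> T) T (H T \<omega>)) \<omega>) \<epsilon> \<eta>')"
    proof (intro exI conjI)
      show "\<eta> - 2*c > 0" using cp by simp
      show "wpa M (\<lambda>T \<omega>.
           sharp_min (\<lambda>\<phi>. f T \<phi> (patch_removal (\<kappa> T) T (H T \<omega>)) \<omega>) N
             (\<phi>h T (patch_removal (\<kappa> T) T (H T \<omega>)) \<omega>) \<epsilon> (\<eta> - 2*c))"
        using wpa_conj[OF prob wpa_conj[OF prob gapw sw] A2[OF cp(1)]]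
      proof (rule wpa_mono)
        fix T \<omega> assume a: "(gap_min (\<lambda>\<phi>. f T \<phi> (H T \<omega>) \<omega>) V N \<delta> \<and>
           sharp_min (\<lambda>\<phi>. f T \<phi> (H T \<omega>) \<omega>) N (\<phi>h T (H T \<omega>) \<omega>) (\<epsilon>/2) \<eta>) \<and>
          (SUP \<phi>\<in>V. ereal \<bar>f T \<phi> (H T \<omega>) \<omega> - f T \<phi> (patch_removal (\<kappa> T) T (H T \<omega>)) \<omega>\<bar>) < ereal c"
        note k = key[OF conjunct1[OF conjunct1[OF a]] conjunct2[OF a]]
        have nn: "norm (\<phi>h T (patch_removal (\<kappa> T) T (H T \<omega>)) \<omega> - \<phi>h T (H T \<omega>) \<omega>) < \<epsilon>/2"
          by (rule conjunct1[OF conjunct2[OF k], rule_format, OF conjunct2[OF conjunct1[OF a]] cp(2) cp(3)])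
        show "sharp_min (\<lambda>\<phi>. f T \<phi> (patch_removal (\<kappa> T) T (H T \<omega>)) \<omega>) N
             (\<phi>h T (patch_removal (\<kappa> T) T (H T \<omega>)) \<omega>) \<epsilon> (\<eta> - 2*c)"
          by (rule conjunct2[OF conjunct2[OF k], rule_format, OF conjunct2[OF conjunct1[OF a]] nn])
      qed
    qed
  qed
  have C3: "\<forall>\<epsilon>>0. wpa M (\<lambda>T \<omega>.
           norm (\<phi>h T (patch_removal (\<kappa> T) T (H T \<omega>)) \<omega> - \<phi>h T (H T \<omega>) \<omega>) < \<epsilon>)"
  proof (intro allI impI)
    fix \<epsilon> :: real assume ep: "\<epsilon> > 0"
    then obtain \<eta> where hp: "\<eta> > 0" and sw: "wpa M (\<lambda>T \<omega>.
           sharp_min (\<lambda>\<phi>. f T \<phi> (H T \<omega>) \<omega>) N (\<phi>h T (H T \<omega>) \<omega>) \<epsilon> \<eta>)"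
      using sharpw by blast
    define c where "c = min \<delta> \<eta> / 4"
    have cp: "c > 0" "2*c < \<delta>" "2*c < \<eta>" using dpos hp unfolding c_def by auto
    show "wpa M (\<lambda>T \<omega>.
           norm (\<phi>h T (patch_removal (\<kappa> T) T (H T \<omega>)) \<omega> - \<phi>h T (H T \<omega>) \<omega>) < \<epsilon>)"
      using wpa_conj[OF prob wpa_conj[OF prob gapw sw] A2[OF cp(1)]]
    proof (rule wpa_mono)
      fix T \<omega> assume a: "(gap_min (\<lambda>\<phi>. f T \<phi> (H T \<omega>) \<omega>) V N \<delta> \<and>
           sharp_min (\<lambda>\<phi>. f T \<phi> (H T \<omega>) \<omega>) N (\<phi>h T (H T \<omega>) \<omega>) \<epsilon> \<eta>) \<and>
          (SUP \<phi>\<in>V. ereal \<bar>f T \<phi> (H T \<omega>) \<omega> - f T \<phi> (patch_removal (\<kappa> T) T (H T \<omega>)) \<omega>\<bar>) < ereal c"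
      note k = key[OF conjunct1[OF conjunct1[OF a]] conjunct2[OF a]]
      show "norm (\<phi>h T (patch_removal (\<kappa> T) T (H T \<omega>)) \<omega> - \<phi>h T (H T \<omega>) \<omega>) < \<epsilon>"
        by (rule conjunct1[OF conjunct2[OF k], rule_format, OF conjunct2[OF conjunct1[OF a]] cp(2) cp(3)])
    qed
  qed
  show "(\<exists>\<delta>'>0. wpa M (\<lambda>T \<omega>. gap_min (\<lambda>\<phi>. f T \<phi> (patch_removal (\<kappa> T) T (H T \<omega>)) \<omega>) V N \<delta>'))
     \<and> (\<forall>\<epsilon>>0. \<exists>\<eta>'>0. wpa M (\<lambda>T \<omega>.
           sharp_min (\<lambda>\<phi>. f T \<phi> (patch_removal (\<kappa> T) T (H T \<omega>)) \<omega>) N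
             (\<phi>h T (patch_removal (\<kappa> T) T (H T \<omega>)) \<omega>) \<epsilon> \<eta>'))
     \<and> (\<forall>\<epsilon>>0. wpa M (\<lambda>T \<omega>.
           norm (\<phi>h T (patch_removal (\<kappa> T) T (H T \<omega>)) \<omega> - \<phi>h T (H T \<omega>) \<omega>) < \<epsilon>))" by (rule conjI[OF C1 conjI[OF C2 C3]])
qed

theorem theorem1:
  fixes M :: "'w measure"
    and V N :: "'p::euclidean_space set"
    and e :: "'p \<Rightarrow> nat \<Rightarrow> 'w \<Rightarrow> 'v"
    and g :: "nat \<Rightarrow> (nat \<Rightarrow> 'v) \<Rightarrow> real"
    and f :: "nat \<Rightarrow> 'p \<Rightarrow> nat set \<Rightarrow> 'w \<Rightarrow> real"
    and \<phi>h :: "nat \<Rightarrow> nat set \<Rightarrow> 'w \<Rightarrow> 'p"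
    and H :: "nat \<Rightarrow> 'w \<Rightarrow> nat set"
    and \<kappa> :: "nat \<Rightarrow> nat"
  assumes prob: "prob_space M"
    and crit: "\<And>T \<phi> Hs \<omega>. f T \<phi> Hs \<omega> = g T (restrict (\<lambda>t. e \<phi> t \<omega>) Hs)"
    and HT: "\<And>T \<omega>. H T \<omega> \<subseteq> {1..T}"
    and N_open: "open N" and N_sub: "N \<subseteq> V"
    and A2: "\<And>c. c > 0 \<Longrightarrow> wpa M (\<lambda>T \<omega>.
              (SUP \<phi>\<in>V. ereal \<bar>f T \<phi> (H T \<omega>) \<omega> - f T \<phi> (patch_removal (\<kappa> T) T (H T \<omega>)) \<omega>\<bar>) < ereal c)"
  shows
   "((\<forall>T Hs \<omega>. Hs \<subseteq> {1..T} \<longrightarrow>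
        \<phi>h T Hs \<omega> \<in> V \<and> (\<forall>\<phi>\<in>V. f T (\<phi>h T Hs \<omega>) Hs \<omega> \<le> f T \<phi> Hs \<omega>))
     \<and> (\<exists>\<delta>>0. wpa M (\<lambda>T \<omega>. gap_min (\<lambda>\<phi>. f T \<phi> (H T \<omega>) \<omega>) V N \<delta>))
     \<and> (\<forall>\<epsilon>>0. \<exists>\<eta>>0. wpa M (\<lambda>T \<omega>.
           sharp_min (\<lambda>\<phi>. f T \<phi> (H T \<omega>) \<omega>) N (\<phi>h T (H T \<omega>) \<omega>) \<epsilon> \<eta>))
    \<longrightarrow>
     (\<exists>\<delta>'>0. wpa M (\<lambda>T \<omega>. gap_min (\<lambda>\<phi>. f T \<phi> (patch_removal (\<kappa> T) T (H T \<omega>)) \<omega>) V N \<delta>'))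
     \<and> (\<forall>\<epsilon>>0. \<exists>\<eta>'>0. wpa M (\<lambda>T \<omega>.
           sharp_min (\<lambda>\<phi>. f T \<phi> (patch_removal (\<kappa> T) T (H T \<omega>)) \<omega>) N
             (\<phi>h T (patch_removal (\<kappa> T) T (H T \<omega>)) \<omega>) \<epsilon> \<eta>'))
     \<and> (\<forall>\<epsilon>>0. wpa M (\<lambda>T \<omega>.
           norm (\<phi>h T (patch_removal (\<kappa> T) T (H T \<omega>)) \<omega> - \<phi>h T (H T \<omega>) \<omega>) < \<epsilon>)))
  \<and>
   ((\<forall>T Hs \<omega>. Hs \<subseteq> {1..T} \<longrightarrow>
        \<phi>h T Hs \<omega> \<in> V \<and> (\<forall>\<phi>\<in>V. f T \<phi> Hs \<omega> \<le> f T (\<phi>h T Hs \<omega>) Hs \<omega>))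
     \<and> (\<exists>\<delta>>0. wpa M (\<lambda>T \<omega>. gap_max (\<lambda>\<phi>. f T \<phi> (H T \<omega>) \<omega>) V N \<delta>))
     \<and> (\<forall>\<epsilon>>0. \<exists>\<eta>>0. wpa M (\<lambda>T \<omega>.
           sharp_max (\<lambda>\<phi>. f T \<phi> (H T \<omega>) \<omega>) N (\<phi>h T (H T \<omega>) \<omega>) \<epsilon> \<eta>))
    \<longrightarrow>
     (\<exists>\<delta>'>0. wpa M (\<lambda>T \<omega>. gap_max (\<lambda>\<phi>. f T \<phi> (patch_removal (\<kappa> T) T (H T \<omega>)) \<omega>) V N \<delta>'))
     \<and> (\<forall>\<epsilon>>0. \<exists>\<eta>'>0. wpa M (\<lambda>T \<omega>.
           sharp_max (\<lambda>\<phi>. f T \<phi> (patch_removal (\<kappa> T) T (H T \<omega>)) \<omega>) N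
             (\<phi>h T (patch_removal (\<kappa> T) T (H T \<omega>)) \<omega>) \<epsilon> \<eta>'))
     \<and> (\<forall>\<epsilon>>0. wpa M (\<lambda>T \<omega>.
           norm (\<phi>h T (patch_removal (\<kappa> T) T (H T \<omega>)) \<omega> - \<phi>h T (H T \<omega>) \<omega>) < \<epsilon>)))"
proof -
  have A2': "\<And>c. c > 0 \<Longrightarrow> wpa M (\<lambda>T \<omega>.
      (SUP \<phi>\<in>V. ereal \<bar>(- f T \<phi> (H T \<omega>) \<omega>) - (- f T \<phi> (patch_removal (\<kappa> T) T (H T \<omega>)) \<omega>)\<bar>) < ereal c)"
    using A2 by (simp add: abs_minus_commute)
  note P2 = part_min[where f="\<lambda>T \<phi> Hs \<omega>. - f T \<phi> Hs \<omega>" and \<phi>h=\<phi>h, OF prob HT N_sub]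
  show ?thesis
    apply (rule conjI)
     apply (rule part_min[OF prob HT N_sub])
     apply (erule A2)
    unfolding gap_max_neg sharp_max_neg
    apply (rule impI)
    apply (rule mp[OF P2])
     apply (erule A2')
    apply (erule rev_mp)
    apply (simp only: neg_le_iff_le simp_thms)
    done
qed

end
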